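(* Let $\sigma,\widehat\sigma\in\Omega$ be such that the transition probability $\mathbb P(\widehat\sigma\to\sigma)$ in the auxiliary TASEP is positive. Then for each $\mu\in S_\lambda$, \[\sum_{\widehat\mu\in S_\lambda}\mathbb P\big((\widehat\mu,\widehat\sigma)\to(\mu,\sigma)\big)\,F_{\widehat\mu}(\widehat\sigma\boldsymbol\chi;t)=F_\mu(\sigma\boldsymbol\chi;t)\,\mathbb P(\widehat\sigma\to\sigma),\] where the transition probabilities on the left are those of $\blacktriangle\mathrm{ASEP}_\lambda$.
   Context: ASEP polynomials: $\lambda=(\lambda_1\le\cdots\le\lambda_n)$ nonnegative integers, $S_\lambda$ its rearrangements; $wy=(y_{w^{-1}(1)},\dots,y_{w^{-1}(n)})$ for $w\in\mathfrak S_n$, $(wf)(\mathbf x)=f(w\mathbf x)$; indices mod $n$; $\overline s_i$ ($i\in\mathbb Z/n\mathbb Z$) the transposition of $i,i+1$; $c=(1\,2\cdots n)$; $T_i=t-\frac{tx_i-x_{i+1}}{x_i-x_{i+1}}(1-\overline s_i)$. $(F_\mu(\mathbf x;t))_{\mu\in S_\lambda}$ is the unique family of homogeneous polynomials in $\mathbb C(t)[\mathbf x]$ with coefficient of $x_1^{\lambda_n-\lambda_1}\cdots x_n^{\lambda_n-\lambda_n}$ in $F_\lambda$ equal to $1$ and: $T_iF_\mu=F_{\overline s_i\mu}$ if $\mu_i<\mu_{i+1}$; $\overline s_iF_\mu=F_\mu$ if $\mu_i=\mu_{i+1}$; $cF_{c\mu}=F_\mu$. $\mathfrak f_r(k,k')=1$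 if $k>k'$, $r$ if $k<k'$, $0$ if $k=k'$. Stoned multispecies ASEP: $t\in[0,1)$; stones $\blacktriangle_1,\dots,\blacktriangle_n$, surjective densities $\varrho:\{\blacktriangle_j\}\to[m]$ ($m\ge2$) with $1=\varrho(\blacktriangle_1)\le\cdots\le\varrho(\blacktriangle_n)=m$. $\Omega$: the $\sigma\in\mathfrak S_n$ such that, for each density $k$, stones of density $k$ occur in the same cyclic order in $\blacktriangle_{\sigma^{-1}(1)},\dots,\blacktriangle_{\sigma^{-1}(n)}$ as in $\blacktriangle_1,\dots,\blacktriangle_n$. $\mathfrak K(\sigma)=\#\{i:\varrho(\blacktriangle_{\sigma^{-1}(i)})<\varrho(\blacktriangle_{\sigma^{-1}(i+1)})\}$. Auxiliary TASEP on $\Omega$: $\mathbb P(\sigma\to\overline s_i\sigma)=1/n$ if $\varrho(\blacktriangle_{\sigma^{-1}(i)})<\varrho(\blacktriangle_{\sigma^{-1}(i+1)})$, $\mathbb P(\sigma\to\sigma)=1-\mathfrak K(\sigma)/n$, others $0$. $\boldsymbol\chi=(\chi_1,\dots,\chi_n)$ nonzero reals with $p(j,j'):=\frac{\chi_j-\chi_{j'}}{t\chi_j-\chi_{j'}}\in[0,1)$ whenever $\varrho(\blacktriangle_j)<\varrho(\blacktriangle_{j'})$. $\blacktriangle\mathrm{ASEP}_\lambda$ on $S_\lambda\times\Omega$: if $\varrho(\blacktriangle_{\sigma^{-1}(i)})<\varrho(\blacktriangle_{\sigma^{-1}(i+1)})$ and $\mu_i\ne\mu_{i+1}$, then $\mathbb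 P((\mu,\sigma)\to(\overline s_i\mu,\overline s_i\sigma))=\frac1np(\sigma^{-1}(i),\sigma^{-1}(i+1))\mathfrak f_t(\mu_i,\mu_{i+1})$ and $\mathbb P((\mu,\sigma)\to(\mu,\overline s_i\sigma))=\frac1n[1-p(\sigma^{-1}(i),\sigma^{-1}(i+1))\mathfrak f_t(\mu_i,\mu_{i+1})]$; if the density condition holds and $\mu_i=\mu_{i+1}$, $\mathbb P((\mu,\sigma)\to(\mu,\overline s_i\sigma))=\frac1n$; $\mathbb P((\mu,\sigma)\to(\mu,\sigma))=1-\mathfrak K(\sigma)/n$; all others $0$. *)

theory Defs
  imports Complex_Main "HOL-Library.Poly_Mapping" "HOL-Computational_Algebra.Fraction_Field"
    "HOL-Computational_Algebra.Polynomial" "HOL-Combinatorics.Permutations"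
    "HOL-Combinatorics.Transposition" "HOL-Library.Multiset"
begin

section \<open>Positions, permutations, rearrangements (0-based: positions 0..n-1, indices mod n)\<close>

definition nxt :: "nat \<Rightarrow> nat \<Rightarrow> nat" where
  "nxt n i = Suc i mod n"

definition sbar :: "nat \<Rightarrow> nat \<Rightarrow> nat \<Rightarrow> nat" where
  "sbar n i = transpose i (nxt n i)"

definition cyc :: "nat \<Rightarrow> nat \<Rightarrow> nat" where
  "cyc n k = (if k < n then Suc k mod n else k)"

definition act_list :: "nat \<Rightarrow> (nat \<Rightarrow> nat) \<Rightarrow> 'a list \<Rightarrow> 'a list" where
  "act_list n w y = map (\<lambda>k. y ! inv w k) [0..<n]"

definition act_vec :: "(nat \<Rightarrow> nat) \<Rightarrow> (nat \<Rightarrow> 'a) \<Rightarrow> (nat \<Rightarrow> 'a)" where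
  "act_vec w y = (\<lambda>k. y (inv w k))"

definition rearrangements :: "nat list \<Rightarrow> nat list set" where
  "rearrangements lam = {mu. mset mu = mset lam}"

type_synonym ratfun = "complex poly fract"
type_synonym mpoly = "(nat \<Rightarrow>\<^sub>0 nat) \<Rightarrow>\<^sub>0 ratfun"

definition Var :: "nat \<Rightarrow> mpoly" where
  "Var i = Poly_Mapping.single (Poly_Mapping.single i 1) 1"

definition Const :: "ratfun \<Rightarrow> mpoly" where
  "Const a = Poly_Mapping.single 0 a"

definition tfr :: ratfun where
  "tfr = Fraction_Field.Fract [:0, 1:] 1"

definition tot_deg :: "(nat \<Rightarrow>\<^sub>0 nat) \<Rightarrow> nat" where
  "tot_deg a = (\<Sum>k\<in>Poly_Mapping.keys a. Poly_Mapping.lookup a k)"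

definition in_vars :: "nat \<Rightarrow> mpoly \<Rightarrow> bool" where
  "in_vars n f \<longleftrightarrow> (\<forall>a\<in>Poly_Mapping.keys f. Poly_Mapping.keys a \<subseteq> {..<n})"

definition homogeneous :: "mpoly \<Rightarrow> bool" where
  "homogeneous f \<longleftrightarrow> (\<exists>d. \<forall>a\<in>Poly_Mapping.keys f. tot_deg a = d)"

definition subst_mon :: "(nat \<Rightarrow> nat) \<Rightarrow> (nat \<Rightarrow>\<^sub>0 nat) \<Rightarrow> (nat \<Rightarrow>\<^sub>0 nat)" where
  "subst_mon g a = (\<Sum>k\<in>Poly_Mapping.keys a. Poly_Mapping.single (g k) (Poly_Mapping.lookup a k))"

definition subst_poly :: "(nat \<Rightarrow> nat) \<Rightarrow> mpoly \<Rightarrow> mpoly" where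
  "subst_poly g f = (\<Sum>a\<in>Poly_Mapping.keys f. Poly_Mapping.single (subst_mon g a) (Poly_Mapping.lookup f a))"

text \<open>(w f)(x) = f(w x), where (w x)_k = x_(w^-1 k): substitute x_k := x_(w^-1 k).\<close>
definition act_poly :: "(nat \<Rightarrow> nat) \<Rightarrow> mpoly \<Rightarrow> mpoly" where
  "act_poly w f = subst_poly (inv w) f"

text \<open>T_i f = g, written without division:
  (x_i - x_(i+1)) (g - t f) = - (t x_i - x_(i+1)) (f - sbar_i f).
  Since C(t)[x] is an integral domain this determines g uniquely.\<close>
definition T_rel :: "nat \<Rightarrow> nat \<Rightarrow> mpoly \<Rightarrow> mpoly \<Rightarrow> bool" where
  "T_rel n i f g \<longleftrightarrow>
     (Var i - Var (nxt n i)) * (g - Const tfr * f)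
       = - ((Const tfr * Var i - Var (nxt n i)) * (f - act_poly (sbar n i) f))"

definition lead_mon :: "nat list \<Rightarrow> (nat \<Rightarrow>\<^sub>0 nat)" where
  "lead_mon lam = (\<Sum>k<length lam. Poly_Mapping.single k (lam ! (length lam - 1) - lam ! k))"

definition is_ASEP_family :: "nat list \<Rightarrow> (nat list \<Rightarrow> mpoly) \<Rightarrow> bool" where
  "is_ASEP_family lam F \<longleftrightarrow>
     (let n = length lam in
      (\<forall>mu\<in>rearrangements lam. in_vars n (F mu) \<and> homogeneous (F mu)) \<and>
      Poly_Mapping.lookup (F lam) (lead_mon lam) = 1 \<and>
      (\<forall>mu\<in>rearrangements lam. \<forall>i<n.
          mu ! i < mu ! nxt n i \<longrightarrow> T_rel n i (F mu) (F (act_list n (sbar n i) mu))) \<and>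
      (\<forall>mu\<in>rearrangements lam. \<forall>i<n.
          mu ! i = mu ! nxt n i \<longrightarrow> act_poly (sbar n i) (F mu) = F mu) \<and>
      (\<forall>mu\<in>rearrangements lam. act_poly (cyc n) (F (act_list n (cyc n) mu)) = F mu))"

definition fract_regular :: "complex \<Rightarrow> ratfun \<Rightarrow> bool" where
  "fract_regular t0 r \<longleftrightarrow> (\<exists>p q. r = Fraction_Field.Fract p q \<and> poly q t0 \<noteq> 0)"

definition fract_eval :: "complex \<Rightarrow> ratfun \<Rightarrow> complex" where
  "fract_eval t0 r = (THE v. \<exists>p q. r = Fraction_Field.Fract p q \<and> poly q t0 \<noteq> 0 \<and> v = poly p t0 / poly q t0)"

definition eval_poly :: "real \<Rightarrow> (nat \<Rightarrow> real) \<Rightarrow> mpoly \<Rightarrow> complex" where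
  "eval_poly t0 y f =
     (\<Sum>a\<in>Poly_Mapping.keys f. fract_eval (of_real t0) (Poly_Mapping.lookup f a) *
                    (\<Prod>k\<in>Poly_Mapping.keys a. of_real (y k) ^ Poly_Mapping.lookup a k))"

definition stone_densities :: "nat \<Rightarrow> nat \<Rightarrow> (nat \<Rightarrow> nat) \<Rightarrow> bool" where
  "stone_densities n m rho \<longleftrightarrow> 2 \<le> m \<and> 0 < n \<and>
     (\<forall>j k. j \<le> k \<longrightarrow> k < n \<longrightarrow> rho j \<le> rho k) \<and>
     rho 0 = 1 \<and> rho (n - 1) = m \<and> rho ` {..<n} = {1..m}"

definition Omega :: "nat \<Rightarrow> (nat \<Rightarrow> nat) \<Rightarrow> (nat \<Rightarrow> nat) set" where
  "Omega n rho = {sigma. sigma permutes {..<n} \<and>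
     (\<forall>k. \<exists>r. rotate r (filter (\<lambda>j. rho j = k) [0..<n])
                 = filter (\<lambda>j. rho j = k) (map (inv sigma) [0..<n]))}"

definition dens_up :: "nat \<Rightarrow> (nat \<Rightarrow> nat) \<Rightarrow> (nat \<Rightarrow> nat) \<Rightarrow> nat \<Rightarrow> bool" where
  "dens_up n rho sigma i \<longleftrightarrow> rho (inv sigma i) < rho (inv sigma (nxt n i))"

definition Kcount :: "nat \<Rightarrow> (nat \<Rightarrow> nat) \<Rightarrow> (nat \<Rightarrow> nat) \<Rightarrow> nat" where
  "Kcount n rho sigma = card {i. i < n \<and> dens_up n rho sigma i}"

text \<open>Auxiliary TASEP: P(sh -> s).  The targets sbar_i sh for distinct admissible i are
  distinct and differ from sh, so summing over i gives exactly the stated kernel.\<close>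
definition P_tasep :: "nat \<Rightarrow> (nat \<Rightarrow> nat) \<Rightarrow> (nat \<Rightarrow> nat) \<Rightarrow> (nat \<Rightarrow> nat) \<Rightarrow> real" where
  "P_tasep n rho sh s =
     (if s = sh then 1 - real (Kcount n rho sh) / real n else 0) +
     (\<Sum>i\<in>{i. i < n \<and> dens_up n rho sh i}. if s = sbar n i \<circ> sh then 1 / real n else 0)"

definition frate :: "real \<Rightarrow> nat \<Rightarrow> nat \<Rightarrow> real" where
  "frate r k k' = (if k > k' then 1 else if k < k' then r else 0)"

definition pswap :: "real \<Rightarrow> (nat \<Rightarrow> real) \<Rightarrow> nat \<Rightarrow> nat \<Rightarrow> real" where
  "pswap t chi j j' = (chi j - chi j') / (t * chi j - chi j')"

definition P_sasep :: "nat \<Rightarrow> (nat \<Rightarrow> nat) \<Rightarrow> real \<Rightarrow> (nat \<Rightarrow> real) \<Rightarrow>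
    nat list \<Rightarrow> (nat \<Rightarrow> nat) \<Rightarrow> nat list \<Rightarrow> (nat \<Rightarrow> nat) \<Rightarrow> real" where
  "P_sasep n rho t chi muh sh mu s =
     (if mu = muh \<and> s = sh then 1 - real (Kcount n rho sh) / real n else 0) +
     (\<Sum>i\<in>{i. i < n \<and> dens_up n rho sh i}.
        (let pf = pswap t chi (inv sh i) (inv sh (nxt n i)) * frate t (muh ! i) (muh ! nxt n i)
         in if muh ! i \<noteq> muh ! nxt n i then
              (if mu = act_list n (sbar n i) muh \<and> s = sbar n i \<circ> sh then pf / real n else 0) +
              (if mu = muh \<and> s = sbar n i \<circ> sh then (1 - pf) / real n else 0)
            else (if mu = muh \<and> s = sbar n i \<circ> sh then 1 / real n else 0)))"

end

theory Submission imports Defs begin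

section \<open>Regular fractions\<close>

lemma fract_eval_Fract:
  assumes "poly q t0 \<noteq> 0"
  shows "fract_eval t0 (Fraction_Field.Fract p q) = poly p t0 / poly q t0"
  unfolding fract_eval_def
proof (rule the_equality)
  show "\<exists>pa qa. Fraction_Field.Fract p q = Fraction_Field.Fract pa qa \<and> poly qa t0 \<noteq> 0 \<and> poly p t0 / poly q t0 = poly pa t0 / poly qa t0"
    using assms by blast
next
  fix v assume "\<exists>pa qa. Fraction_Field.Fract p q = Fraction_Field.Fract pa qa \<and> poly qa t0 \<noteq> 0 \<and> v = poly pa t0 / poly qa t0"
  then obtain p' q' where e: "Fraction_Field.Fract p q = Fraction_Field.Fract p' q'" and q': "poly q' t0 \<noteq> 0" and v: "v = poly p' t0 / poly q' t0"
    by blast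
  have "q \<noteq> 0" "q' \<noteq> 0" using assms q' by auto
  with e have "p * q' = p' * q" by (simp add: eq_fract)
  then have "poly p t0 * poly q' t0 = poly p' t0 * poly q t0" by (metis poly_mult)
  with assms q' show "v = poly p t0 / poly q t0" by (simp add: v field_simps)
qed

lemma reg_const: "poly q t0 \<noteq> 0 \<Longrightarrow> fract_regular t0 (Fraction_Field.Fract p q)
   \<and> fract_eval t0 (Fraction_Field.Fract p q) = poly p t0 / poly q t0"
  unfolding fract_regular_def by (auto simp: fract_eval_Fract)

lemma reg_add: "fract_regular t0 r \<Longrightarrow> fract_regular t0 s \<Longrightarrow> fract_regular t0 (r + s)
   \<and> fract_eval t0 (r + s) = fract_eval t0 r + fract_eval t0 s"
proof -
  assume "fract_regular t0 r" "fract_regular t0 s"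
  then obtain p q p' q' where r: "r = Fraction_Field.Fract p q" "poly q t0 \<noteq> 0"
    and s: "s = Fraction_Field.Fract p' q'" "poly q' t0 \<noteq> 0" unfolding fract_regular_def by blast
  then have nz: "q \<noteq> 0" "q' \<noteq> 0" by auto
  have e: "r + s = Fraction_Field.Fract (p * q' + p' * q) (q * q')" using r s nz by simp
  have "poly (q * q') t0 \<noteq> 0" using r s by simp
  from reg_const[OF this] show ?thesis unfolding e
    using r s by (simp add: fract_eval_Fract field_simps)
qed

lemma reg_mult: "fract_regular t0 r \<Longrightarrow> fract_regular t0 s \<Longrightarrow> fract_regular t0 (r * s)
   \<and> fract_eval t0 (r * s) = fract_eval t0 r * fract_eval t0 s"
proof -
  assume "fract_regular t0 r" "fract_regular t0 s"
  then obtain p q p' q' where r: "r = Fraction_Field.Fract p q" "poly q t0 \<noteq> 0"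
    and s: "s = Fraction_Field.Fract p' q'" "poly q' t0 \<noteq> 0" unfolding fract_regular_def by blast
  have e: "r * s = Fraction_Field.Fract (p * p') (q * q')" using r s by simp
  have "poly (q * q') t0 \<noteq> 0" using r s by simp
  from reg_const[OF this] show ?thesis unfolding e
    using r s by (simp add: fract_eval_Fract field_simps)
qed

lemma reg_uminus: "fract_regular t0 r \<Longrightarrow> fract_regular t0 (- r)
   \<and> fract_eval t0 (- r) = - fract_eval t0 r"
proof -
  assume "fract_regular t0 r"
  then obtain p q where r: "r = Fraction_Field.Fract p q" "poly q t0 \<noteq> 0"
    unfolding fract_regular_def by blast
  have e: "- r = Fraction_Field.Fract (- p) q" using r by simp
  show ?thesis unfolding fract_regular_def e
    using r by (auto simp: fract_eval_Fract field_simps)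
qed

lemma reg_zero: "fract_regular t0 0 \<and> fract_eval t0 0 = 0"
  unfolding Zero_fract_def using reg_const[of 1 t0 0] by simp

lemma reg_one: "fract_regular t0 1 \<and> fract_eval t0 1 = 1"
  unfolding One_fract_def using reg_const[of 1 t0 1] by simp

lemma reg_tfr: "fract_regular t0 tfr \<and> fract_eval t0 tfr = t0"
  unfolding tfr_def using reg_const[of 1 t0 "[:0,1:]"] by simp

section \<open>Evaluation of polynomials\<close>

definition mon :: "(nat \<Rightarrow> real) \<Rightarrow> (nat \<Rightarrow>\<^sub>0 nat) \<Rightarrow> complex" where
  "mon y a = (\<Prod>k\<in>Poly_Mapping.keys a. of_real (y k) ^ Poly_Mapping.lookup a k)"

definition regp :: "complex \<Rightarrow> mpoly \<Rightarrow> bool" where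
  "regp c f \<longleftrightarrow> (\<forall>a. fract_regular c (Poly_Mapping.lookup f a))"

lemma mon_superset:
  assumes "finite S" "Poly_Mapping.keys a \<subseteq> S"
  shows "mon y a = (\<Prod>k\<in>S. of_real (y k) ^ Poly_Mapping.lookup a k)"
  unfolding mon_def
  by (rule prod.mono_neutral_left) (use assms in \<open>auto simp: in_keys_iff\<close>)

lemma mon_add: "mon y (a + b) = mon y a * mon y b"
proof -
  let ?S = "Poly_Mapping.keys a \<union> Poly_Mapping.keys b"
  have "mon y (a + b) = (\<Prod>k\<in>?S. of_real (y k) ^ Poly_Mapping.lookup (a + b) k)"
    by (rule mon_superset) (use keys_add[of a b] in auto)
  also have "\<dots> = (\<Prod>k\<in>?S. of_real (y k) ^ Poly_Mapping.lookup a k * of_real (y k) ^ Poly_Mapping.lookup b k)"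
    by (simp add: lookup_add power_add)
  also have "\<dots> = mon y a * mon y b"
    by (simp add: prod.distrib mon_superset[of ?S])
  finally show ?thesis .
qed

lemma mon_zero: "mon y 0 = 1"
  by (simp add: mon_def)

lemma mon_single: "mon y (Poly_Mapping.single k e) = of_real (y k) ^ e"
  by (simp add: mon_def)

lemma mon_sum: "finite A \<Longrightarrow> mon y (\<Sum>x\<in>A. h x) = (\<Prod>x\<in>A. mon y (h x))"
  by (induction A rule: finite_induct) (auto simp: mon_zero mon_add)

lemma eval_superset:
  assumes "finite S" "Poly_Mapping.keys f \<subseteq> S"
  shows "eval_poly t0 y f = (\<Sum>a\<in>S. fract_eval (of_real t0) (Poly_Mapping.lookup f a) * mon y a)"
  unfolding eval_poly_def mon_def[symmetric]
  by (rule sum.mono_neutral_left) (use assms in \<open>auto simp: in_keys_iff reg_zero\<close>)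

lemma eval_add:
  assumes "regp (of_real t0) f" "regp (of_real t0) g"
  shows "regp (of_real t0) (f + g) \<and> eval_poly t0 y (f + g) = eval_poly t0 y f + eval_poly t0 y g"
proof
  show "regp (of_real t0) (f + g)" using assms reg_add by (simp add: regp_def lookup_add)
  let ?S = "Poly_Mapping.keys f \<union> Poly_Mapping.keys g"
  have "eval_poly t0 y (f + g) = (\<Sum>a\<in>?S. fract_eval (of_real t0) (Poly_Mapping.lookup (f + g) a) * mon y a)"
    by (rule eval_superset) (use keys_add[of f g] in auto)
  also have "\<dots> = (\<Sum>a\<in>?S. fract_eval (of_real t0) (Poly_Mapping.lookup f a) * mon y a
                    + fract_eval (of_real t0) (Poly_Mapping.lookup g a) * mon y a)"
    using assms reg_add by (simp add: regp_def lookup_add distrib_right)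
  also have "\<dots> = eval_poly t0 y f + eval_poly t0 y g"
    by (simp add: sum.distrib eval_superset[of ?S])
  finally show "eval_poly t0 y (f + g) = eval_poly t0 y f + eval_poly t0 y g" .
qed

lemma eval_uminus:
  assumes "regp (of_real t0) f"
  shows "regp (of_real t0) (- f) \<and> eval_poly t0 y (- f) = - eval_poly t0 y f"
proof
  show "regp (of_real t0) (- f)" using assms reg_uminus by (simp add: regp_def)
  have "eval_poly t0 y (- f) = (\<Sum>a\<in>Poly_Mapping.keys f. fract_eval (of_real t0) (Poly_Mapping.lookup (- f) a) * mon y a)"
    by (rule eval_superset) (auto simp: in_keys_iff)
  also have "\<dots> = - eval_poly t0 y f"
    using assms reg_uminus by (simp add: regp_def eval_superset[of "Poly_Mapping.keys f"] sum_negf)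
  finally show "eval_poly t0 y (- f) = - eval_poly t0 y f" .
qed

lemma eval_diff:
  assumes "regp (of_real t0) f" "regp (of_real t0) g"
  shows "regp (of_real t0) (f - g) \<and> eval_poly t0 y (f - g) = eval_poly t0 y f - eval_poly t0 y g"
proof -
  have u: "regp (of_real t0) (- g)" using eval_uminus[OF assms(2)] by blast
  show ?thesis using eval_add[OF assms(1) u, of y] eval_uminus[OF assms(2), of y]
    by simp
qed

lemma eval_sum:
  assumes "finite A" "\<forall>x\<in>A. regp (of_real t0) (h x)"
  shows "regp (of_real t0) (\<Sum>x\<in>A. h x) \<and> eval_poly t0 y (\<Sum>x\<in>A. h x) = (\<Sum>x\<in>A. eval_poly t0 y (h x))"
  using assms
proof (induction A rule: finite_induct)
  case empty
  then show ?case using reg_zero by (simp add: regp_def eval_poly_def)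
next
  case (insert x F)
  then show ?case using eval_add[of t0 "h x" "sum h F" y] by simp
qed

lemma eval_single:
  assumes "fract_regular (of_real t0) v"
  shows "regp (of_real t0) (Poly_Mapping.single a v) \<and>
     eval_poly t0 y (Poly_Mapping.single a v) = fract_eval (of_real t0) v * mon y a"
proof
  show "regp (of_real t0) (Poly_Mapping.single a v)"
    using assms reg_zero by (simp add: regp_def lookup_single when_def)
  show "eval_poly t0 y (Poly_Mapping.single a v) = fract_eval (of_real t0) v * mon y a"
    by (subst eval_superset[of "{a}"]) auto
qed

lemma pm_expansion: "f = (\<Sum>a\<in>Poly_Mapping.keys f. Poly_Mapping.single a (Poly_Mapping.lookup f a))"
proof (rule poly_mapping_eqI)
  fix b
  show "Poly_Mapping.lookup f b = Poly_Mapping.lookup (\<Sum>a\<in>Poly_Mapping.keys f. Poly_Mapping.single a (Poly_Mapping.lookup f a)) b"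
    by (simp add: lookup_sum lookup_single when_def in_keys_iff)
qed

lemma eval_mult:
  assumes f: "regp (of_real t0) f" and g: "regp (of_real t0) g"
  shows "regp (of_real t0) (f * g) \<and> eval_poly t0 y (f * g) = eval_poly t0 y f * eval_poly t0 y g"
proof -
  let ?c = "of_real t0 :: complex"
  have "f * g = (\<Sum>a\<in>Poly_Mapping.keys f. Poly_Mapping.single a (Poly_Mapping.lookup f a)) *
                (\<Sum>b\<in>Poly_Mapping.keys g. Poly_Mapping.single b (Poly_Mapping.lookup g b))"
    using pm_expansion[of f] pm_expansion[of g] by simp
  also have "\<dots> = (\<Sum>a\<in>Poly_Mapping.keys f. \<Sum>b\<in>Poly_Mapping.keys g.
          Poly_Mapping.single (a + b) (Poly_Mapping.lookup f a * Poly_Mapping.lookup g b))"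
    by (simp add: sum_product mult_single)
  finally have e: "f * g = \<dots>" .
  have r: "\<forall>a\<in>Poly_Mapping.keys f. \<forall>b\<in>Poly_Mapping.keys g.
     regp ?c (Poly_Mapping.single (a + b) (Poly_Mapping.lookup f a * Poly_Mapping.lookup g b)) \<and>
     eval_poly t0 y (Poly_Mapping.single (a + b) (Poly_Mapping.lookup f a * Poly_Mapping.lookup g b))
       = (fract_eval ?c (Poly_Mapping.lookup f a) * mon y a) * (fract_eval ?c (Poly_Mapping.lookup g b) * mon y b)"
    using f g reg_mult eval_single by (simp add: regp_def mon_add eval_single)
  have r2: "\<forall>a\<in>Poly_Mapping.keys f. regp ?c (\<Sum>b\<in>Poly_Mapping.keys g.
          Poly_Mapping.single (a + b) (Poly_Mapping.lookup f a * Poly_Mapping.lookup g b)) \<and>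
       eval_poly t0 y (\<Sum>b\<in>Poly_Mapping.keys g.
          Poly_Mapping.single (a + b) (Poly_Mapping.lookup f a * Poly_Mapping.lookup g b))
       = (fract_eval ?c (Poly_Mapping.lookup f a) * mon y a) * eval_poly t0 y g"
  proof
    fix a assume a: "a \<in> Poly_Mapping.keys f"
    show "regp ?c (\<Sum>b\<in>Poly_Mapping.keys g.
          Poly_Mapping.single (a + b) (Poly_Mapping.lookup f a * Poly_Mapping.lookup g b)) \<and>
       eval_poly t0 y (\<Sum>b\<in>Poly_Mapping.keys g.
          Poly_Mapping.single (a + b) (Poly_Mapping.lookup f a * Poly_Mapping.lookup g b))
       = (fract_eval ?c (Poly_Mapping.lookup f a) * mon y a) * eval_poly t0 y g"
      using eval_sum[of "Poly_Mapping.keys g" t0 "\<lambda>b. Poly_Mapping.single (a + b) (Poly_Mapping.lookup f a * Poly_Mapping.lookup g b)" y] r a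
      by (simp add: eval_poly_def mon_def sum_distrib_left)
  qed
  show ?thesis
    unfolding e
    using eval_sum[of "Poly_Mapping.keys f" t0 _ y] r2
    by (simp add: eval_poly_def mon_def sum_distrib_right)
qed

lemma eval_Var: "regp (of_real t0) (Var i) \<and> eval_poly t0 y (Var i) = of_real (y i)"
  unfolding Var_def using eval_single[of t0 1 "Poly_Mapping.single i 1" y] reg_one
  by (simp add: mon_single)

lemma eval_Const: "fract_regular (of_real t0) v \<Longrightarrow>
   regp (of_real t0) (Const v) \<and> eval_poly t0 y (Const v) = fract_eval (of_real t0) v"
  unfolding Const_def using eval_single[of t0 v 0 y] by (simp add: mon_zero)

lemma eval_subst:
  assumes f: "regp (of_real t0) f"
  shows "regp (of_real t0) (subst_poly g f) \<and> eval_poly t0 y (subst_poly g f) = eval_poly t0 (y \<circ> g) f"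
proof -
  have m: "mon y (subst_mon g a) = mon (y \<circ> g) a" for a
  proof -
    have "mon y (subst_mon g a) = (\<Prod>k\<in>Poly_Mapping.keys a. mon y (Poly_Mapping.single (g k) (Poly_Mapping.lookup a k)))"
      unfolding subst_mon_def by (rule mon_sum) simp
    also have "\<dots> = mon (y \<circ> g) a" by (simp only: mon_single) (simp add: mon_def)
    finally show ?thesis .
  qed
  have r: "\<forall>a\<in>Poly_Mapping.keys f. regp (of_real t0) (Poly_Mapping.single (subst_mon g a) (Poly_Mapping.lookup f a)) \<and>
     eval_poly t0 y (Poly_Mapping.single (subst_mon g a) (Poly_Mapping.lookup f a))
       = fract_eval (of_real t0) (Poly_Mapping.lookup f a) * mon (y \<circ> g) a"
    using eval_single f m unfolding regp_def by metis
  have "(\<Sum>a\<in>Poly_Mapping.keys f. fract_eval (of_real t0) (Poly_Mapping.lookup f a) * mon (y \<circ> g) a)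
      = eval_poly t0 (y \<circ> g) f" by (simp add: eval_poly_def mon_def)
  then show ?thesis
    unfolding subst_poly_def
    using eval_sum[of "Poly_Mapping.keys f" t0 "\<lambda>a. Poly_Mapping.single (subst_mon g a) (Poly_Mapping.lookup f a)" y] r
    by simp
qed

lemma eval_act:
  assumes "regp (of_real t0) f"
  shows "regp (of_real t0) (act_poly w f) \<and> eval_poly t0 y (act_poly w f) = eval_poly t0 (act_vec w y) f"
proof -
  have "y \<circ> inv w = act_vec w y" by (simp add: act_vec_def fun_eq_iff)
  then show ?thesis unfolding act_poly_def using eval_subst[OF assms, of "inv w" y] by simp
qed

lemma T_eval:
  assumes f: "regp (of_real t0) f" and g: "regp (of_real t0) g" and T: "T_rel n i f g"
  shows "(of_real (y i) - of_real (y (nxt n i))) * (eval_poly t0 y g - of_real t0 * eval_poly t0 y f)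
     = - ((of_real t0 * of_real (y i) - of_real (y (nxt n i))) *
          (eval_poly t0 y f - eval_poly t0 (act_vec (sbar n i) y) f))"
proof -
  let ?c = "of_real t0 :: complex"
  note V1 = eval_Var[of t0 i y] and V2 = eval_Var[of t0 "nxt n i" y]
  note C = eval_Const[of t0 tfr y, OF reg_tfr[THEN conjunct1]]
  have Ct: "fract_eval ?c tfr = ?c" using reg_tfr by blast
  note Cf = eval_mult[OF C[THEN conjunct1] f, of y]
  note A = eval_act[OF f, of "sbar n i" y]
  note L1 = eval_diff[OF V1[THEN conjunct1] V2[THEN conjunct1], of y]
  note L2 = eval_diff[OF g Cf[THEN conjunct1], of y]
  note L = eval_mult[OF L1[THEN conjunct1] L2[THEN conjunct1], of y]
  note CV = eval_mult[OF C[THEN conjunct1] V1[THEN conjunct1], of y]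
  note R1 = eval_diff[OF CV[THEN conjunct1] V2[THEN conjunct1], of y]
  note R2 = eval_diff[OF f A[THEN conjunct1], of y]
  note R = eval_mult[OF R1[THEN conjunct1] R2[THEN conjunct1], of y]
  note RR = eval_uminus[OF R[THEN conjunct1], of y]
  from T have "eval_poly t0 y ((Var i - Var (nxt n i)) * (g - Const tfr * f))
     = eval_poly t0 y (- ((Const tfr * Var i - Var (nxt n i)) * (f - act_poly (sbar n i) f)))"
    unfolding T_rel_def by simp
  then show ?thesis
    using V1 V2 C Ct Cf A L1 L2 L CV R1 R2 R RR by simp
qed

lemma alg1:
  fixes a b t U V U' :: complex
  assumes D: "t * a - b \<noteq> 0" and e: "(a - b) * (V - t * U) = - ((t * a - b) * (U - U'))"
  shows "(1 - (a - b) / (t * a - b) * t) * U + (a - b) / (t * a - b) * V = U'"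
proof -
  define p where "p = (a - b) / (t * a - b)"
  have "p * (V - t * U) = U' - U" using D e unfolding p_def by (simp add: field_simps)
  moreover have "(1 - p * t) * U + p * V = U + p * (V - t * U)" by (simp add: algebra_simps)
  ultimately show ?thesis unfolding p_def[symmetric] by simp
qed

lemma alg2:
  fixes a b t U V U' V' :: complex
  assumes D: "t * a - b \<noteq> 0" and ab: "a \<noteq> b"
    and e1: "(a - b) * (U - t * V) = - ((t * a - b) * (V - V'))"
    and e2: "(b - a) * (U' - t * V') = - ((t * b - a) * (V' - V))"
  shows "(1 - (a - b) / (t * a - b)) * U + (a - b) / (t * a - b) * t * V = U'"
proof -
  have k: "((a - b) * (t * a - b)) * U' = ((a - b) * (t * a - b)) * ((1 - (a - b) / (t * a - b)) * U + (a - b) / (t * a - b) * t * V)"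
  proof -
    have "((a - b) * (t * a - b)) * U' = (a - b) * ((t * a - b - (a - b)) * U + (a - b) * t * V)"
      using e1 e2 by algebra
    also have "\<dots> = ((a - b) * (t * a - b)) * ((1 - (a - b) / (t * a - b)) * U + (a - b) / (t * a - b) * t * V)"
    proof -
      define q where "q = (a - b) / (t * a - b)"
      have dq: "(t * a - b) * q = a - b" using D unfolding q_def by simp
      show ?thesis unfolding q_def[symmetric] using dq by algebra
    qed
    finally show ?thesis .
  qed
  have "(a - b) * (t * a - b) \<noteq> 0" using D ab by simp
  with k show ?thesis by simp
qed

section \<open>Permutations and lists\<close>

lemma nxt_lt: "i < n \<Longrightarrow> nxt n i < n"
  unfolding nxt_def by simp

lemma sbar_permutes: "i < n \<Longrightarrow> sbar n i permutes {..<n}"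
  unfolding sbar_def by (rule permutes_swap_id) (auto simp: nxt_lt)

lemma sbar_inv: "inv (sbar n i) = sbar n i"
  unfolding sbar_def by simp

lemma sbar_sbar: "sbar n i (sbar n i x) = x"
  unfolding sbar_def by simp

lemma sbar_i: "sbar n i i = nxt n i" and sbar_k: "sbar n i (nxt n i) = i"
  unfolding sbar_def by simp_all

lemma act_list_perm: "length mu = n \<Longrightarrow> act_list n w mu = permute_list (inv w) mu"
  unfolding act_list_def permute_list_def by simp

lemma act_list_sbar_rearr:
  assumes "mu \<in> rearrangements lam" "length lam = n" "i < n"
  shows "act_list n (sbar n i) mu \<in> rearrangements lam"
proof -
  have l: "length mu = n" using assms by (auto simp: rearrangements_def dest: mset_eq_length)
  have "inv (sbar n i) permutes {..<length mu}" using sbar_permutes[OF assms(3)] l by (simp add: sbar_inv)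
  then show ?thesis using assms l by (simp add: act_list_perm rearrangements_def)
qed

lemma act_list_nth: "j < n \<Longrightarrow> act_list n w mu ! j = mu ! inv w j"
  unfolding act_list_def by simp

lemma length_act_list [simp]: "length (act_list n w mu) = n"
  unfolding act_list_def by simp

lemma act_list_sbar_invol:
  assumes "length mu = n" "i < n"
  shows "act_list n (sbar n i) (act_list n (sbar n i) mu) = mu"
proof (rule nth_equalityI)
  fix j assume "j < length (act_list n (sbar n i) (act_list n (sbar n i) mu))"
  then have j: "j < n" by simp
  have "sbar n i j < n" using permutes_in_image[OF sbar_permutes[OF assms(2)]] j by simp
  then show "act_list n (sbar n i) (act_list n (sbar n i) mu) ! j = mu ! j"
    using j by (simp add: act_list_nth sbar_inv sbar_sbar)
qed (use assms in simp)

lemma act_vec_comp: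
  assumes "sh permutes {..<n}" "i < n"
  shows "act_vec (sbar n i \<circ> sh) chi = act_vec (sbar n i) (act_vec sh chi)"
proof -
  have "inv (sbar n i \<circ> sh) = inv sh \<circ> inv (sbar n i)"
    by (rule o_inv_distrib) (use assms sbar_permutes permutes_bij in auto)
  then show ?thesis by (simp add: act_vec_def fun_eq_iff)
qed

lemma act_vec_sbar_invol: "act_vec (sbar n i) (act_vec (sbar n i) y) = y"
  by (simp add: act_vec_def sbar_inv sbar_sbar fun_eq_iff)

theorem lemma4p4:
  fixes lam :: "nat list" and m :: nat and rho :: "nat \<Rightarrow> nat"
    and t :: real and chi :: "nat \<Rightarrow> real"
    and F :: "nat list \<Rightarrow> mpoly"
    and sigma sigmah :: "nat \<Rightarrow> nat" and mu :: "nat list"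
  defines "n \<equiv> length lam"
  assumes lam_sorted: "sorted lam"
    and rho: "stone_densities n m rho"
    and t: "0 \<le> t" "t < 1"
    and chi_nz: "\<forall>j<n. chi j \<noteq> 0"
    and chi_p: "\<forall>j<n. \<forall>j'<n. rho j < rho j' \<longrightarrow>
                   t * chi j - chi j' \<noteq> 0 \<and> 0 \<le> pswap t chi j j' \<and> pswap t chi j j' < 1"
    and F: "is_ASEP_family lam F"
    and F_reg: "\<forall>nu\<in>rearrangements lam. \<forall>a. fract_regular (of_real t) (Poly_Mapping.lookup (F nu) a)"
    and sigma: "sigma \<in> Omega n rho" and sigmah: "sigmah \<in> Omega n rho"
    and pos: "P_tasep n rho sigmah sigma > 0"
    and mu: "mu \<in> rearrangements lam"
  shows "(\<Sum>muh\<in>rearrangements lam.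
            of_real (P_sasep n rho t chi muh sigmah mu sigma) *
            eval_poly t (act_vec sigmah chi) (F muh))
         = eval_poly t (act_vec sigma chi) (F mu) * of_real (P_tasep n rho sigmah sigma)"
proof -
  have n0: "0 < n" using rho by (simp add: stone_densities_def)
  have shp: "sigmah permutes {..<n}" using sigmah by (simp add: Omega_def)
  define A where "A = {i. i < n \<and> dens_up n rho sigmah i}"
  have finA: "finite A" unfolding A_def by simp
  define R where "R = rearrangements lam"
  have lenR: "\<And>nu. nu \<in> R \<Longrightarrow> length nu = n"
    unfolding R_def rearrangements_def n_def by (auto dest: mset_eq_length)
  have finR: "finite R"
  proof (rule finite_subset)
    show "R \<subseteq> {xs. set xs \<subseteq> set lam \<and> length xs = n}"
      using lenR unfolding R_def rearrangements_def by (auto dest: mset_eq_setD)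
  qed (simp add: finite_lists_length_eq)
  have muR: "mu \<in> R" using mu R_def by simp
  have regF: "\<And>nu. nu \<in> R \<Longrightarrow> regp (of_real t) (F nu)"
    using F_reg unfolding R_def regp_def by blast
  have Fs: "\<And>nu i. nu \<in> R \<Longrightarrow> i < n \<Longrightarrow> nu ! i < nu ! nxt n i \<Longrightarrow> T_rel n i (F nu) (F (act_list n (sbar n i) nu))"
    and Fe: "\<And>nu i. nu \<in> R \<Longrightarrow> i < n \<Longrightarrow> nu ! i = nu ! nxt n i \<Longrightarrow> act_poly (sbar n i) (F nu) = F nu"
    using F unfolding is_ASEP_family_def R_def Let_def n_def by blast+
  have sbar_ne: "\<And>i. i \<in> A \<Longrightarrow> sbar n i \<circ> sigmah \<noteq> sigmah"
  proof
    fix i assume iA: "i \<in> A" and e: "sbar n i \<circ> sigmah = sigmah"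
    have "sbar n i (sigmah (inv sigmah i)) = sigmah (inv sigmah i)" using e by (metis comp_apply)
    then have "nxt n i = i" using permutes_inverses[OF shp] by (simp add: sbar_i)
    then show False using iA by (simp add: A_def dens_up_def)
  qed
  have uniq: "\<And>i i'. i \<in> A \<Longrightarrow> i' \<in> A \<Longrightarrow> sbar n i' \<circ> sigmah = sbar n i \<circ> sigmah \<Longrightarrow> i' = i"
  proof -
    fix i i' assume iA: "i \<in> A" and i'A: "i' \<in> A" and e: "sbar n i' \<circ> sigmah = sbar n i \<circ> sigmah"
    have "sbar n i' (sigmah (inv sigmah i)) = sbar n i (sigmah (inv sigmah i))" using e by (metis comp_apply)
    then have e2: "sbar n i' i = nxt n i" using permutes_inverses[OF shp] by (simp add: sbar_i)
    have ni: "nxt n i \<noteq> i" using iA by (auto simp: A_def dens_up_def)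
    show "i' = i"
    proof (rule ccontr)
      assume ne: "i' \<noteq> i"
      have "i = nxt n i'"
      proof (rule ccontr)
        assume "i \<noteq> nxt n i'"
        then have "sbar n i' i = i" using ne unfolding sbar_def by simp
        then show False using e2 ni by simp
      qed
      then have "sbar n i' i = i'" unfolding sbar_def by simp
      then have "i' = nxt n i" using e2 by simp
      then show False using iA i'A \<open>i = nxt n i'\<close> by (auto simp: A_def dens_up_def)
    qed
  qed
  have cases: "sigma = sigmah \<or> (\<exists>i\<in>A. sigma = sbar n i \<circ> sigmah)"
  proof (rule ccontr)
    assume neg: "\<not> ?thesis"
    then have "P_tasep n rho sigmah sigma = 0"
      unfolding P_tasep_def A_def[symmetric] by (auto intro: sum.neutral)
    then show False using pos by simp
  qed
  let ?E = "\<lambda>nu z. eval_poly t z (F nu)"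
  show ?thesis
  proof (cases "sigma = sigmah")
    case True
    have PT: "P_tasep n rho sigmah sigma = 1 - real (Kcount n rho sigmah) / real n"
      unfolding P_tasep_def A_def[symmetric] using True sbar_ne
      by (auto intro!: sum.neutral) (metis)
    have PS: "P_sasep n rho t chi muh sigmah mu sigma = (if muh = mu then 1 - real (Kcount n rho sigmah) / real n else 0)" for muh
      unfolding P_sasep_def A_def[symmetric] using True sbar_ne
      by (auto intro!: sum.neutral simp: Let_def) (metis)+
    have "(\<Sum>muh\<in>rearrangements lam. of_real (P_sasep n rho t chi muh sigmah mu sigma) * ?E muh (act_vec sigmah chi))
       = (\<Sum>muh\<in>R. if muh = mu then of_real (1 - real (Kcount n rho sigmah) / real n) * ?E mu (act_vec sigmah chi) else 0)"
      unfolding R_def[symmetric] by (rule sum.cong) (auto simp: PS)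
    also have "\<dots> = of_real (1 - real (Kcount n rho sigmah) / real n) * ?E mu (act_vec sigmah chi)"
      using finR muR by (simp add: sum.delta')
    finally show ?thesis using PT True by (simp add: mult.commute)
  next
    case False
    then obtain i where iA: "i \<in> A" and sig: "sigma = sbar n i \<circ> sigmah" using cases by blast
    define k where "k = nxt n i"
    have ilt: "i < n" and up: "dens_up n rho sigmah i" using iA by (auto simp: A_def)
    have klt: "k < n" using ilt by (simp add: k_def nxt_lt)
    define j where "j = inv sigmah i"
    define j' where "j' = inv sigmah k"
    have jlt: "j < n" "j' < n" unfolding j_def j'_def
      using permutes_in_image[OF permutes_inv[OF shp]] ilt klt by auto
    have rj: "rho j < rho j'" using up by (simp add: dens_up_def j_def j'_def k_def)
    define y where "y = act_vec sigmah chi"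
    define y' where "y' = act_vec sigma chi"
    have yy': "y' = act_vec (sbar n i) y" unfolding y'_def y_def sig using act_vec_comp[OF shp ilt] .
    have y'y: "act_vec (sbar n i) y' = y" unfolding yy' by (rule act_vec_sbar_invol)
    define a where "a = y i"
    define b where "b = y k"
    have a: "a = chi j" and b: "b = chi j'" by (simp_all add: a_def b_def y_def act_vec_def j_def j'_def)
    have y'i: "y' i = b" and y'k: "y' k = a"
      by (simp_all add: yy' act_vec_def sbar_inv sbar_i sbar_k a_def b_def k_def[symmetric])+ (simp add: k_def sbar_k)
    have D: "t * a - b \<noteq> 0" using chi_p jlt rj a b by blast
    define p where "p = pswap t chi j j'"
    have pdef: "p = (a - b) / (t * a - b)" by (simp add: p_def pswap_def a b)
    have PT: "P_tasep n rho sigmah sigma = 1 / real n"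
    proof -
      have "P_tasep n rho sigmah sigma = (\<Sum>x\<in>A. if x = i then 1 / real n else 0)"
        unfolding P_tasep_def A_def[symmetric] using sbar_ne[OF iA] sig uniq[OF iA]
        by (auto intro!: sum.cong)
      then show ?thesis using finA iA by simp
    qed
    define Q where "Q muh = (let pf = pswap t chi (inv sigmah i) (inv sigmah (nxt n i)) * frate t (muh ! i) (muh ! nxt n i)
         in if muh ! i \<noteq> muh ! nxt n i then
              (if mu = act_list n (sbar n i) muh then pf / real n else 0) +
              (if mu = muh then (1 - pf) / real n else 0)
            else (if mu = muh then 1 / real n else 0))" for muh
    have PS: "P_sasep n rho t chi muh sigmah mu sigma = Q muh" for muh
    proof -
      have c: "(let pf = pswap t chi (inv sigmah x) (inv sigmah (nxt n x)) * frate t (muh ! x) (muh ! nxt n x)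
         in if muh ! x \<noteq> muh ! nxt n x then
              (if mu = act_list n (sbar n x) muh \<and> sigma = sbar n x \<circ> sigmah then pf / real n else 0) +
              (if mu = muh \<and> sigma = sbar n x \<circ> sigmah then (1 - pf) / real n else 0)
            else (if mu = muh \<and> sigma = sbar n x \<circ> sigmah then 1 / real n else 0))
          = (if x = i then Q muh else 0)" if xA: "x \<in> A" for x
      proof (cases "x = i")
        case True
        then show ?thesis unfolding Q_def Let_def by (simp add: sig)
      next
        case False
        then have "sigma \<noteq> sbar n x \<circ> sigmah" using uniq[OF iA xA] sig by metis
        then show ?thesis using False by (simp add: Let_def)
      qed
      have "P_sasep n rho t chi muh sigmah mu sigma = 0 + (\<Sum>x\<in>A. if x = i then Q muh else 0)"
        unfolding P_sasep_def A_def[symmetric] using False c by (simp cong: sum.cong)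
      then show ?thesis using finA iA by simp
    qed
    have pQ: "pswap t chi (inv sigmah i) (inv sigmah (nxt n i)) = p"
      by (simp add: p_def j_def j'_def k_def)
    have lhs_eq: "(\<Sum>muh\<in>rearrangements lam. of_real (P_sasep n rho t chi muh sigmah mu sigma) * ?E muh (act_vec sigmah chi))
       = (\<Sum>muh\<in>R. of_real (Q muh) * ?E muh y)"
      unfolding R_def[symmetric] y_def PS ..
    have mun: "length mu = n" using lenR muR .
    show ?thesis
    proof (cases "mu ! i = mu ! k")
      case eq: True
      have Qe: "Q muh = (if muh = mu then 1 / real n else 0)" if mR: "muh \<in> R" for muh
      proof (cases "muh = mu")
        case True then show ?thesis using eq by (simp add: Q_def Let_def k_def)
      next
        case ne: False
        have "muh ! i = muh ! k" if h: "mu = act_list n (sbar n i) muh"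
        proof -
          have "mu ! i = muh ! k" "mu ! k = muh ! i" unfolding h
            using ilt klt by (simp_all add: act_list_nth sbar_inv sbar_i sbar_k k_def)
          then show "muh ! i = muh ! k" using eq by simp
        qed
        then show ?thesis using ne by (auto simp: Q_def Let_def k_def)
      qed
      have "(\<Sum>muh\<in>R. of_real (Q muh) * ?E muh y) = (\<Sum>muh\<in>R. if muh = mu then of_real (1 / real n) * ?E mu y else 0)"
        by (rule sum.cong) (auto simp: Qe)
      also have "\<dots> = of_real (1 / real n) * ?E mu y" using finR muR by (simp add: sum.delta')
      also have "?E mu y = ?E mu y'"
      proof -
        have "?E mu y = eval_poly t y (act_poly (sbar n i) (F mu))"
          using Fe[OF muR ilt] eq by (simp add: k_def)
        also have "\<dots> = ?E mu y'" using eval_act[OF regF[OF muR], of "sbar n i" y] yy' by simp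
        finally show ?thesis .
      qed
      finally show ?thesis unfolding lhs_eq PT y'_def by (simp add: mult.commute)
    next
      case ne: False
      define nu where "nu = act_list n (sbar n i) mu"
      have nuR: "nu \<in> R" unfolding nu_def R_def
        using act_list_sbar_rearr[OF muR[unfolded R_def]] n_def ilt by simp
      have nui: "nu ! i = mu ! k" and nuk: "nu ! k = mu ! i" unfolding nu_def
        using ilt klt by (simp_all add: act_list_nth sbar_inv sbar_i sbar_k k_def)
      have nune: "nu \<noteq> mu" using nui nuk ne by auto
      have snu: "act_list n (sbar n i) nu = mu" unfolding nu_def by (rule act_list_sbar_invol[OF mun ilt])
      have Qe: "Q muh = (if muh = mu then (1 - p * frate t (mu ! i) (mu ! k)) / real n else 0)
                 + (if muh = nu then p * frate t (nu ! i) (nu ! k) / real n else 0)" if mR: "muh \<in> R" for muh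
      proof -
        consider "muh = mu" | "muh = nu" | "muh \<noteq> mu" "muh \<noteq> nu" by blast
        then show ?thesis
        proof cases
          case 1
          then show ?thesis using ne nune nu_def by (auto simp: Q_def Let_def k_def pQ)
        next
          case 2
          then show ?thesis using ne nune nu_def snu nui nuk by (auto simp: Q_def Let_def k_def pQ)
        next
          case 3
          have "mu \<noteq> act_list n (sbar n i) muh"
          proof
            assume h: "mu = act_list n (sbar n i) muh"
            then have "nu = muh" unfolding nu_def using act_list_sbar_invol[OF lenR[OF mR] ilt] by simp
            then show False using 3 by simp
          qed
          then show ?thesis using 3 by (auto simp: Q_def Let_def k_def)
        qed
      qed
      define U where "U = ?E mu y"
      define V where "V = ?E nu y"
      define U' where "U' = ?E mu y'"
      define V' where "V' = ?E nu y'"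
      have "(\<Sum>muh\<in>R. of_real (Q muh) * ?E muh y) =
         (\<Sum>muh\<in>R. (if muh = mu then of_real ((1 - p * frate t (mu ! i) (mu ! k)) / real n) * U else 0)
                 + (if muh = nu then of_real (p * frate t (nu ! i) (nu ! k) / real n) * V else 0))"
        by (rule sum.cong) (auto simp: Qe U_def V_def distrib_right)
      also have "\<dots> = of_real ((1 - p * frate t (mu ! i) (mu ! k)) / real n) * U
                     + of_real (p * frate t (nu ! i) (nu ! k) / real n) * V"
        using finR muR nuR by (simp add: sum.distrib sum.delta')
      finally have L: "(\<Sum>muh\<in>R. of_real (Q muh) * ?E muh y) = \<dots>" .
      have Dc: "of_real t * of_real a - of_real b \<noteq> (0::complex)"
        using D by (metis of_real_diff of_real_eq_0_iff of_real_mult)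
      have pc: "(of_real p :: complex) = (of_real a - of_real b) / (of_real t * of_real a - of_real b)"
        by (simp add: pdef)
      show ?thesis
      proof (cases "mu ! i < mu ! k")
        case lt: True
        have T: "T_rel n i (F mu) (F nu)" using Fs[OF muR ilt] lt by (simp add: k_def nu_def)
        have e: "(of_real a - of_real b) * (V - of_real t * U) = - ((of_real t * of_real a - of_real b) * (U - U'))"
          using T_eval[OF regF[OF muR] regF[OF nuR] T, of y]
          by (simp add: a_def b_def k_def U_def V_def U'_def yy')
        have fr: "frate t (mu ! i) (mu ! k) = t" "frate t (nu ! i) (nu ! k) = 1"
          using lt nui nuk by (simp_all add: frate_def)
        have "(1 - of_real p * of_real t) * U + of_real p * V = U'"
          unfolding pc by (rule alg1[OF Dc e])
        then show ?thesis unfolding lhs_eq L fr PT U'_def[symmetric] y'_def[symmetric]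
          using n0 by (simp add: field_simps)
      next
        case gt: False
        then have lt: "nu ! i < nu ! k" using ne nui nuk by simp
        have T: "T_rel n i (F nu) (F mu)" using Fs[OF nuR ilt] lt snu by (simp add: k_def)
        have e1: "(of_real a - of_real b) * (U - of_real t * V) = - ((of_real t * of_real a - of_real b) * (V - V'))"
          using T_eval[OF regF[OF nuR] regF[OF muR] T, of y]
          by (simp add: a_def b_def k_def U_def V_def V'_def yy')
        have e2: "(of_real b - of_real a) * (U' - of_real t * V') = - ((of_real t * of_real b - of_real a) * (V' - V))"
          using T_eval[OF regF[OF nuR] regF[OF muR] T, of y'] y'i y'k y'y
          by (simp add: k_def U'_def V_def V'_def)
        have fr: "frate t (mu ! i) (mu ! k) = 1" "frate t (nu ! i) (nu ! k) = t"
          using lt nui nuk by (simp_all add: frate_def)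
        have key: "(1 - of_real p) * U + of_real p * of_real t * V = U'"
        proof (cases "a = b")
          case True
          have "y' = y"
          proof
            fix x show "y' x = y x"
              using True unfolding yy' act_vec_def sbar_inv sbar_def a_def b_def k_def
              by (cases "x = i"; cases "x = nxt n i") auto
          qed
          then show ?thesis using True by (simp add: pdef U_def U'_def)
        next
          case False
          have "(of_real a :: complex) \<noteq> of_real b" using False by simp
          then show ?thesis unfolding pc by (rule alg2[OF Dc _ e1 e2])
        qed
        have "of_real ((1 - p * 1) / real n) * U + of_real (p * t / real n) * V
            = of_real (1 / real n) * ((1 - of_real p) * U + of_real p * of_real t * V)"
          by (simp add: field_simps add_divide_distrib[symmetric] diff_divide_distrib[symmetric])
        also have "\<dots> = U' * of_real (1 / real n)" using key by simp
        finally show ?thesis unfolding lhs_eq L fr PT U'_def[symmetric] y'_def[symmetric] .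
      qed
    qed

  qed
qed

end
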